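(* Let $\theta_1,\theta_2>0$, $\theta=\theta_1+\theta_2$, $p=\theta_1/\theta$, $\beta>0$, $\phi=\theta/\beta$, and let $r_1,r_2=\frac12\big(1-\phi\pm\sqrt{(1-\phi)^2+4\phi p}\big)$ (so $0<r_1<1$, $r_2<0$). Let $a=(r_1-r_2)/2>0$, $b=(1-r_1)/(1-r_2)\in(0,1)$, $c=-r_1/r_2>0$. Let \[ \mu(t)=r_1+(r_1-r_2)\frac{b\,e^{-\beta(r_1-r_2)t/2}}{1-b\,e^{-\beta(r_1-r_2)t/2}},\qquad \nu(t)=r_1+(r_1-r_2)\frac{\frac{r_1}{r_2}e^{-\beta(r_1-r_2)t/2}}{1-\frac{r_1}{r_2}e^{-\beta(r_1-r_2)t/2}}, \] and let $p_{11}=\mathbb{E}[\mu(\tau)]$, $p_{21}=\mathbb{E}[\nu(\tau)]$ with $\tau$ exponential of rate 1. Then \[ p_{11}=r_1+2b^{-1/(a\beta)}\beta^{-1}\int_0^by^{1/(a\beta)}(1-y)^{-1}dy=r_1+2\beta^{-1}\sum_{k=0}^\infty\frac{b^{k+1}}{1/(a\beta)+k+1}, \] \begin{align*} p_{21}&=r_1-2c^{-1/(a\beta)}\beta^{-1}\int_0^{c/(1+c)}y^{1/(a\beta)}(1-y)^{-1/(a\beta)-1}dy\\ &=r_1-2c^{-1/(a\beta)}\beta^{-1}\sum_{k=0}^\infty\frac{\big((a\beta+1)/(a\beta)\big)_{(k)}}{k!}\frac{\big(c/(1+c)\big)^{1/(a\beta)+k+1}}{1/(a\beta)+k+1}, \end{align*}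 where $a_{(k)}=a(a+1)\cdots(a+k-1)$.
   Context: $\mu(t)$ and $\nu(t)$ are the solutions of $\dot\chi=\tfrac12(\theta_1-\theta\chi)+\tfrac12\beta\chi(1-\chi)$ with $\chi(0)=1$ and $\chi(0)=0$ respectively; $p_{11},p_{21}$ are the entries of the transition matrix between the types of successive whole-population replacements in the star-shaped Fleming–Viot model with mutation and selection. *)

theory Defs
  imports "HOL-Probability.Probability"
begin

end

theory Submission
  imports Defs
begin


lemma subst_gen:
  fixes h G G' F :: "real \<Rightarrow> real" and X :: real
  assumes X: "0 < X"
  and dG: "\<And>y. 0 < y \<Longrightarrow> y < X \<Longrightarrow> DERIV G y :> G' y"
  and cG': "\<And>y. 0 < y \<Longrightarrow> y < X \<Longrightarrow> isCont G' y"
  and G'nn: "\<And>y. 0 \<le> y \<Longrightarrow> y \<le> X \<Longrightarrow> 0 \<le> G' y"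
  and Gneg: "\<And>y. 0 < y \<Longrightarrow> y < X \<Longrightarrow> G y < 0"
  and ch: "\<And>t. 0 < t \<Longrightarrow> isCont h t"
  and hnn: "\<And>t. 0 < t \<Longrightarrow> 0 \<le> h t"
  and lim0: "filterlim G at_bot (at_right 0)"
  and limX: "(G \<longlongrightarrow> 0) (at_left X)"
  and FG: "\<And>y. 0 < y \<Longrightarrow> y < X \<Longrightarrow> exp (G y) * h (- G y) * G' y = F y"
  and Fint: "set_integrable lborel {0<..<X} F"
  shows "set_integrable lborel {0<..} (\<lambda>t. exp (-t) * h t)"
    and "(LBINT t=0..\<infinity>. exp (-t) * h t) = (LBINT y=0..X. F y)"
proof -
  define f where "f = (\<lambda>x. exp x * h (-x))"
  have ein: "einterval 0 (ereal X) = {0<..<X}"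
    by (auto simp: einterval_def zero_ereal_def)
  have cf: "isCont f (G y)" if "0 < ereal y" "ereal y < ereal X" for y
  proof -
    have y: "0 < y" "y < X" using that by (auto simp: zero_ereal_def)
    have "isCont h (- G y)" using ch Gneg[OF y] by simp
    then have "isCont (\<lambda>x. h (- x)) (G y)"
      using isCont_o2[where f=uminus and a="G y" and g=h] by (simp add: continuous_intros)
    then show ?thesis unfolding f_def by (intro continuous_intros)
  qed
  have intfg: "set_integrable lborel (einterval 0 (ereal X)) (\<lambda>x. f (G x) * G' x)"
    unfolding ein
    by (subst set_integrable_cong[OF refl refl, of _ _ F]) (use FG Fint in \<open>auto simp: f_def\<close>)
  note S = interval_integral_substitution_nonneg[of 0 "ereal X" G G' f "-\<infinity>" 0]
  have prem: "(0::ereal) < ereal X" using X by (simp add: zero_ereal_def)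
  have A: "((ereal \<circ> G \<circ> real_of_ereal) \<longlongrightarrow> - \<infinity>) (at_right 0)"
    using lim0 by (simp add: zero_ereal_def ereal_tendsto_simps)
  have B: "((ereal \<circ> G \<circ> real_of_ereal) \<longlongrightarrow> 0) (at_left (ereal X))"
    using limX by (simp add: zero_ereal_def ereal_tendsto_simps)
  have S1: "set_integrable lborel (einterval (-\<infinity>) 0) f"
    and S2: "(LBINT x=-\<infinity>..0. f x) = (LBINT x=0..ereal X. f (G x) * G' x)"
    using S[OF prem _ _ _ _ _ A B intfg] dG cG' G'nn Gneg hnn cf
    by (auto simp: zero_ereal_def f_def)
  have "interval_lebesgue_integrable lborel 0 \<infinity> (\<lambda>x. f (-x))"
    unfolding interval_integrable_mirror using S1
    by (simp add: interval_lebesgue_integrable_def)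
  then show "set_integrable lborel {0<..} (\<lambda>t. exp (-t) * h t)"
    by (simp add: interval_lebesgue_integral_0_infty f_def)
  have "(LBINT t=0..\<infinity>. exp (-t) * h t) = (LBINT x=-\<infinity>..-0. exp (-(-x)) * h (-x))"
    by (rule interval_integral_reflect)
  also have "\<dots> = (LBINT x=-\<infinity>..0. f x)" by (simp add: f_def)
  also have "\<dots> = (LBINT y=0..X. F y)" unfolding S2
    by (rule interval_integral_cong) (use FG X in \<open>auto simp: f_def einterval_def zero_ereal_def min_def max_def\<close>)
  finally show "(LBINT t=0..\<infinity>. exp (-t) * h t) = (LBINT y=0..X. F y)" .
qed



lemma series_int:
  fixes a :: "nat \<Rightarrow> real" and S :: "real \<Rightarrow> real" and q X :: real
  assumes q: "q > -1" and X: "0 < X"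
    and a: "\<And>k. 0 \<le> a k"
    and S: "\<And>y. 0 < y \<Longrightarrow> y < X \<Longrightarrow> (\<lambda>k. a k * y ^ k) sums S y"
    and int: "set_integrable lborel {0<..<X} (\<lambda>y. y powr q * S y)"
    and Sm: "S \<in> borel_measurable borel"
  shows "(\<lambda>k. a k * X powr (q + real k + 1) / (q + real k + 1)) sums (LBINT y=0..X. y powr q * S y)"
proof -
  define t where "t = (\<lambda>k. a k * X powr (q + real k + 1) / (q + real k + 1))"
  let ?f = "\<lambda>y. indicator {0<..<X} y * (y powr q * S y)"
  have Snn: "0 \<le> S y" if "0 < y" "y < X" for y
    by (rule sums_le[OF _ sums_zero S[OF that]]) (use a that in auto)
  have ein: "einterval 0 (ereal X) = {0<..<X}"
    by (auto simp: einterval_def zero_ereal_def)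
  have LB: "(LBINT y=0..X. y powr q * S y) = integral\<^sup>L lborel ?f"
    using X ein by (simp add: interval_lebesgue_integral_def set_lebesgue_integral_def zero_ereal_def)
  have intf: "integrable lborel ?f" using int by (simp add: set_integrable_def)
  have "ennreal (LBINT y=0..X. y powr q * S y) = (\<integral>\<^sup>+ y. ?f y \<partial>lborel)"
    unfolding LB by (rule nn_integral_eq_integral[symmetric, OF intf]) (auto simp: indicator_def Snn)
  also have "\<dots> = (\<integral>\<^sup>+ y. (\<Sum>k. ennreal (indicator {0<..<X} y * (a k * y powr (q + real k)))) \<partial>lborel)"
  proof (rule nn_integral_cong)
    fix y :: real
    show "ennreal (?f y) = (\<Sum>k. ennreal (indicator {0<..<X} y * (a k * y powr (q + real k))))"
    proof (cases "0 < y \<and> y < X")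
      case True
      then have y: "0 < y" "y < X" by auto
      have "(\<lambda>k. y powr q * (a k * y ^ k)) sums (y powr q * S y)"
        by (rule sums_mult[OF S[OF y]])
      moreover have "y powr q * (a k * y ^ k) = a k * y powr (q + real k)" for k
        using y by (simp add: powr_add powr_realpow)
      ultimately have sm: "(\<lambda>k. a k * y powr (q + real k)) sums (y powr q * S y)" by simp
      have "(\<Sum>k. ennreal (a k * y powr (q + real k))) = ennreal (\<Sum>k. a k * y powr (q + real k))"
        by (rule suminf_ennreal2) (use sm a in \<open>auto simp: sums_iff\<close>)
      then show ?thesis using True sm by (simp add: sums_iff)
    qed simp
  qed
  also have "\<dots> = (\<Sum>k. \<integral>\<^sup>+ y. ennreal (indicator {0<..<X} y * (a k * y powr (q + real k))) \<partial>lborel)"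
    by (rule nn_integral_suminf) measurable
  also have "\<dots> = (\<Sum>k. ennreal (t k))"
  proof (rule suminf_cong)
    fix k
    have "((\<lambda>y. y powr (q + real k)) has_integral (X powr (q + real k + 1) / (q + real k + 1))) {0..X}"
      using has_integral_powr_from_0[of "q + real k" X] q X by (simp add: add.assoc)
    then have "((\<lambda>y. a k * y powr (q + real k)) has_integral (a k * (X powr (q + real k + 1) / (q + real k + 1)))) {0<..<X}"
      unfolding has_integral_Icc_iff_Ioo by (rule has_integral_mult_right)
    from nn_integral_has_integral_lebesgue[OF _ this]
    show "(\<integral>\<^sup>+ y. ennreal (indicator {0<..<X} y * (a k * y powr (q + real k))) \<partial>lborel) = ennreal (t k)"
      using a by (simp add: t_def)
  qed
  finally have eq: "ennreal (LBINT y=0..X. y powr q * S y) = (\<Sum>k. ennreal (t k))" .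
  have tnn: "0 \<le> t k" for k using a q X by (simp add: t_def)
  have "(\<lambda>k. ennreal (t k)) sums ennreal (LBINT y=0..X. y powr q * S y)"
    unfolding eq by (rule summable_sums) (rule summableI)
  moreover have "0 \<le> (LBINT y=0..X. y powr q * S y)"
    unfolding LB by (rule integral_nonneg_AE) (auto simp: indicator_def Snn)
  ultimately show ?thesis using tnn by (simp add: t_def)
qed

lemma expect:
  fixes h :: "real \<Rightarrow> real" and r k :: real and M :: "'s measure" and tau :: "'s \<Rightarrow> real"
  assumes "prob_space M" and D: "distributed M lborel tau (exponential_density 1)"
    and hm: "h \<in> borel_measurable borel"
    and hi: "set_integrable lborel {0<..} (\<lambda>t. exp (-t) * h t)"
  shows "prob_space.expectation M (\<lambda>\<omega>. r + k * h (tau \<omega>)) = r + k * (LBINT t=0..\<infinity>. exp (-t) * h t)"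
proof -
  interpret prob_space M by fact
  let ?D = "exponential_density (1::real)"
  have Dnn: "\<And>x. 0 \<le> ?D x" by (simp add: exponential_density_nonneg)
  have "expectation (\<lambda>\<omega>. r + k * h (tau \<omega>)) = (\<integral>x. ?D x * (r + k * h x) \<partial>lborel)"
    by (rule distributed_integral[symmetric, OF D]) (use hm Dnn in auto)
  have intD: "integrable lborel (\<lambda>x. ?D x * 1)"
    by (subst distributed_integrable[OF D]) (use Dnn in auto)
  have intD1: "(\<integral>x. ?D x * 1 \<partial>lborel) = 1"
    by (subst distributed_integral[OF D]) (use Dnn prob_space in auto)
  have ae: "AE x in lborel. ?D x * h x = indicator {0<..} x * (exp (-x) * h x)"
    using AE_lborel_singleton[of 0] by eventually_elim (auto simp: exponential_density_def indicator_def)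
  have intDh: "integrable lborel (\<lambda>x. ?D x * h x)"
    by (rule integrable_cong_AE[THEN iffD2, OF _ _ ae]) (use hi hm in \<open>auto simp: set_integrable_def\<close>)
  have "(\<integral>x. ?D x * h x \<partial>lborel) = (\<integral>x. indicator {0<..} x * (exp (-x) * h x) \<partial>lborel)"
    by (rule integral_cong_AE) (use ae hm in auto)
  also have "\<dots> = (LBINT t=0..\<infinity>. exp (-t) * h t)"
    by (simp add: interval_lebesgue_integral_0_infty set_lebesgue_integral_def)
  finally have e2: "(\<integral>x. ?D x * h x \<partial>lborel) = (LBINT t=0..\<infinity>. exp (-t) * h t)" .
  have "(\<integral>x. ?D x * (r + k * h x) \<partial>lborel) = (\<integral>x. r * (?D x * 1) + k * (?D x * h x) \<partial>lborel)"
    by (simp add: algebra_simps)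
  also have "\<dots> = r * (\<integral>x. ?D x * 1 \<partial>lborel) + k * (\<integral>x. ?D x * h x \<partial>lborel)"
    using intD intDh by simp
  finally show ?thesis using intD1 e2
    \<open>expectation (\<lambda>\<omega>. r + k * h (tau \<omega>)) = _\<close> by simp
qed



lemma bnd_int:
  fixes f :: "real \<Rightarrow> real"
  assumes X: "0 < X" and fm: "f \<in> borel_measurable borel" and b: "\<And>y. 0 < y \<Longrightarrow> y < X \<Longrightarrow> \<bar>f y\<bar> \<le> B"
  shows "set_integrable lborel {0<..<X} f"
  unfolding set_integrable_def
  by (rule integrableI_bounded_set_indicator[where B=B]) (use X fm b in \<open>auto simp: emeasure_lborel_Ioo\<close>)

lemma em: "(\<lambda>x::real. exp (c * x)) \<in> borel_measurable borel"
  by (rule borel_measurable_continuous_onI) (intro continuous_intros)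

lemma em2: "(\<lambda>x::real. exp (- (c * x))) \<in> borel_measurable borel"
  by (rule borel_measurable_continuous_onI) (intro continuous_intros)

lemma lnlim:
  fixes f :: "real \<Rightarrow> real" and s L :: real
  assumes f: "(f \<longlongrightarrow> L) (at_right 0)" and s: "0 < s"
  shows "filterlim (\<lambda>y. (f y + ln y) / s) at_bot (at_right 0)"
proof -
  have l1: "filterlim (\<lambda>y. f y + ln y) at_bot (at_right 0)"
    using filterlim_tendsto_add_at_bot_iff[OF f, of ln] ln_at_0 by simp
  have "filterlim (\<lambda>y. (1/s) * (f y + ln y)) at_bot (at_right 0)"
    by (rule filterlim_tendsto_pos_mult_at_bot[OF tendsto_const _ l1]) (use s in simp)
  then show ?thesis by (simp add: field_simps)
qed

lemma FCeq_lemma: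
  fixes y c s q :: real
  assumes y: "0 < y" "y < 1" and cp: "0 < c" and sp: "0 < s" and qs: "q = 1 / s"
  defines "G \<equiv> (- ln c - ln (1 - y) + ln y) / s"
  shows "exp G * (c * exp (- (s * (- G))) / (1 + c * exp (- (s * (- G))))) * (1 / (s * y * (1 - y)))
     = c powr (-q) / s * (y powr q * (1 - y) powr (- q - 1))"
proof -
  have lg: "ln (y / ((1 - y) * c)) = - ln c - ln (1 - y) + ln y"
    using y cp by (simp add: ln_div ln_mult)
  have "- (s * (- G)) = ln (y / ((1 - y) * c))" using sp lg by (simp add: G_def)
  then have e1: "exp (- (s * (- G))) = y / ((1 - y) * c)" using y cp by simp
  have "G = q * ln (y / ((1 - y) * c))" using lg qs by (simp add: G_def)
  then have e2: "exp G = (y / ((1 - y) * c)) powr q"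
    using y cp by (simp add: powr_def)
  have hv: "c * (y / ((1 - y) * c)) / (1 + c * (y / ((1 - y) * c))) = y"
    using y cp by (simp add: field_simps)
  have p1: "(y / ((1 - y) * c)) powr q = y powr q / ((1 - y) powr q * c powr q)"
    using y cp by (simp add: powr_divide powr_mult)
  have p2: "(1 - y) powr (- q - 1) = 1 / ((1 - y) powr q * (1 - y))"
  proof -
    have "(1 - y) powr (q + 1) = (1 - y) powr q * (1 - y)" using y by (simp add: powr_add)
    moreover have "(1 - y) powr (- q - 1) = 1 / (1 - y) powr (q + 1)"
    proof -
      have "- q - 1 = - (q + 1)" by simp
      then show ?thesis by (simp only: powr_minus_divide)
    qed
    ultimately show ?thesis by simp
  qed
  have p3: "c powr (-q) = 1 / c powr q" by (simp add: powr_minus_divide)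
  have pos: "0 < (1 - y) powr q" "0 < c powr q" using y cp by auto
  show ?thesis unfolding e1 hv e2 p1 p2 p3 using y cp sp pos
    by (simp add: field_simps)
qed

lemma at_left_lim:
  fixes G :: "real \<Rightarrow> real"
  assumes "(G \<longlongrightarrow> L) (at X)"
  shows "(G \<longlongrightarrow> L) (at_left X)"
  using assms tendsto_mono[OF at_le[OF subset_UNIV]] by blast


theorem corollary2:
  fixes theta1 theta2 theta p beta phi r1 r2 a b c p11 p21 :: real
    and mu nu :: "real \<Rightarrow> real"
    and M :: "'s measure" and tau :: "'s \<Rightarrow> real"
  assumes "theta1 > 0" and "theta2 > 0"
    and "theta = theta1 + theta2" and "p = theta1 / theta"
    and "beta > 0" and "phi = theta / beta"
    and "r1 = (1 - phi + sqrt ((1 - phi)\<^sup>2 + 4 * phi * p)) / 2"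
    and "r2 = (1 - phi - sqrt ((1 - phi)\<^sup>2 + 4 * phi * p)) / 2"
    and "a = (r1 - r2) / 2" and "b = (1 - r1) / (1 - r2)" and "c = - r1 / r2"
    and "\<And>t. mu t = r1 + (r1 - r2) * (b * exp (- beta * (r1 - r2) * t / 2))
                        / (1 - b * exp (- beta * (r1 - r2) * t / 2))"
    and "\<And>t. nu t = r1 + (r1 - r2) * ((r1 / r2) * exp (- beta * (r1 - r2) * t / 2))
                        / (1 - (r1 / r2) * exp (- beta * (r1 - r2) * t / 2))"
    and "prob_space M"
    and "distributed M lborel tau (exponential_density 1)"
    and "p11 = prob_space.expectation M (\<lambda>\<omega>. mu (tau \<omega>))"
    and "p21 = prob_space.expectation M (\<lambda>\<omega>. nu (tau \<omega>))"
  shows "p11 = r1 + 2 * b powr (- 1 / (a * beta)) / beta *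
                 (LBINT y=0..b. y powr (1 / (a * beta)) * (1 - y) powr (-1))
       \<and> p11 = r1 + 2 / beta * (\<Sum>k. b ^ (k + 1) / (1 / (a * beta) + real k + 1))
       \<and> p21 = r1 - 2 * c powr (- 1 / (a * beta)) / beta *
                 (LBINT y=0..c / (1 + c). y powr (1 / (a * beta)) * (1 - y) powr (- 1 / (a * beta) - 1))
       \<and> p21 = r1 - 2 * c powr (- 1 / (a * beta)) / beta *
                 (\<Sum>k. pochhammer ((a * beta + 1) / (a * beta)) k / fact k
                       * (c / (1 + c)) powr (1 / (a * beta) + real k + 1)
                       / (1 / (a * beta) + real k + 1))"
proof -
  have th: "theta > 0" using assms(1-3) by simp
  have p0: "0 < p" "p < 1" using assms(1-4) by auto
  have ph: "phi > 0" using th assms(5,6) by simp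
  define Dq where "Dq = sqrt ((1 - phi)\<^sup>2 + 4 * phi * p)"
  have "sqrt ((1 - phi)\<^sup>2) < Dq" unfolding Dq_def
    by (rule real_sqrt_less_mono) (use ph p0 in simp)
  then have Dlo: "\<bar>1 - phi\<bar> < Dq" by simp
  have "(1 - phi)\<^sup>2 + 4 * phi * p < (1 + phi)\<^sup>2"
  proof -
    have "4 * phi * p < 4 * phi * 1" using ph p0 by (intro mult_strict_left_mono) auto
    then show ?thesis by (simp add: power2_eq_square algebra_simps)
  qed
  then have "Dq < sqrt ((1 + phi)\<^sup>2)" unfolding Dq_def by (rule real_sqrt_less_mono)
  then have Dhi: "Dq < 1 + phi" using ph by simp
  have r1: "r1 = (1 - phi + Dq) / 2" and r2: "r2 = (1 - phi - Dq) / 2"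
    using assms(7,8) by (simp_all add: Dq_def)
  have r1p: "0 < r1" and r1l: "r1 < 1" and r2n: "r2 < 0" and r12: "r2 < r1"
    using Dlo Dhi r1 r2 by (auto simp: abs_if split: if_splits)
  define s where "s = beta * (r1 - r2) / 2"
  have sp: "0 < s" using assms(5) r12 by (simp add: s_def)
  have ab: "a * beta = s" using assms(9) by (simp add: s_def)
  define q where "q = 1 / (a * beta)"
  have qs: "q = 1 / s" using ab q_def by simp
  have qp: "0 < q" using qs sp by simp
  have bp: "0 < b" and bl: "b < 1" unfolding assms(10) using r1l r12 by auto
  have cp: "0 < c" unfolding assms(11) using r1p r2n by (simp add: divide_pos_neg)
  define x where "x = c / (1 + c)"
  have xp: "0 < x" and xl: "x < 1" using cp by (auto simp: x_def field_simps)
  have expeq: "beta * (r1 - r2) * t / 2 = s * t" for t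
    by (simp add: s_def field_simps)
  have mq: "- 1 / (a * beta) = - q" by (simp add: q_def)
  have r12s: "(r1 - r2) / s = 2 / beta" using r12 assms(5) by (simp add: s_def field_simps)
  define hA where "hA = (\<lambda>t. b * exp (- (s * t)) / (1 - b * exp (- (s * t))))"
  have bE: "b * exp (- (s * t)) < 1" if "0 \<le> t" for t
  proof -
    have "exp (- (s * t)) \<le> 1" using sp that by simp
    then have "b * exp (- (s * t)) \<le> b" using bp by (simp add: mult_left_le)
    then show ?thesis using bl by simp
  qed
  have mu_eq: "mu = (\<lambda>t. r1 + (r1 - r2) * hA t)"
    by (rule ext) (simp add: assms(12) hA_def expeq)
  have hAm: "hA \<in> borel_measurable borel" unfolding hA_def
    by (intro borel_measurable_divide borel_measurable_times borel_measurable_diff borel_measurable_const em2)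
  define FA where "FA = (\<lambda>y. (y / b) powr q / (s * (1 - y)))"
  have FAeq: "exp ((- ln b + ln y) / s) * hA (- ((- ln b + ln y) / s)) * (1 / (s * y)) = FA y"
    if y: "0 < y" "y < b" for y
  proof -
    have "- (s * (- ((- ln b + ln y) / s))) = ln y - ln b" using sp by (simp add: field_simps)
    then have e1: "exp (- (s * (- ((- ln b + ln y) / s)))) = y / b"
      using y bp by (simp add: exp_diff)
    have e2: "exp ((- ln b + ln y) / s) = (y / b) powr q"
      using y bp sp by (simp add: powr_def qs ln_div field_simps)
    show ?thesis using y bl sp unfolding hA_def e1 e2 FA_def by (simp add: field_simps)
  qed
  have FAb: "\<bar>FA y\<bar> \<le> 1 / (s * (1 - b))" if y: "0 < y" "y < b" for y
  proof -
    have "(y / b) powr q \<le> 1" using y bp qp by (intro powr_le1) auto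
    moreover have "0 \<le> (y / b) powr q" by simp
    moreover have "1 / (s * (1 - y)) \<le> 1 / (s * (1 - b))"
      using y sp bl by (intro divide_left_mono mult_left_mono mult_pos_pos) auto
    moreover have "0 < s * (1 - y)" using y bl sp by simp
    ultimately have "(y / b) powr q / (s * (1 - y)) \<le> 1 / (s * (1 - b))"
      by (smt (verit) divide_right_mono)
    then show ?thesis using y bl sp by (simp add: FA_def)
  qed
  have FAm: "FA \<in> borel_measurable borel" unfolding FA_def
    by (intro borel_measurable_divide borel_measurable_times borel_measurable_diff borel_measurable_const powr_real_measurable measurable_id)
  have dA: "DERIV (\<lambda>y. (- ln b + ln y) / s) y :> 1 / (s * y)" if "0 < y" "y < b" for y
    using that sp by (auto intro!: derivative_eq_intros simp: field_simps)
  have cA: "isCont (\<lambda>y. 1 / (s * y)) y" if "0 < y" "y < b" for y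
    using that sp by (auto intro!: continuous_intros)
  have gA: "0 \<le> 1 / (s * y)" if "0 \<le> y" "y \<le> b" for y using that sp by simp
  have nA: "(- ln b + ln y) / s < 0" if "0 < y" "y < b" for y
    using that sp by (simp add: divide_neg_pos)
  have chA: "isCont hA t" if "0 < t" for t
    using bE[of t] that unfolding hA_def by (auto intro!: continuous_intros)
  have hnA: "0 \<le> hA t" if "0 < t" for t
    using bE[of t] that bp unfolding hA_def by simp
  have l0A: "filterlim (\<lambda>y. (- ln b + ln y) / s) at_bot (at_right 0)"
    by (rule lnlim[OF tendsto_const sp])
  have "((\<lambda>y. (- ln b + ln y) / s) \<longlongrightarrow> (- ln b + ln b) / s) (at b)"
    using bp sp by (intro tendsto_intros) auto
  then have lXA: "((\<lambda>y. (- ln b + ln y) / s) \<longlongrightarrow> 0) (at_left b)"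
    by (intro at_left_lim) simp
  have FAint: "set_integrable lborel {0<..<b} FA"
    by (rule bnd_int[OF bp FAm FAb])
  note SA = subst_gen[where X=b and G="\<lambda>y. (- ln b + ln y) / s" and G'="\<lambda>y. 1 / (s * y)" and h=hA and F=FA,
     OF bp dA cA gA nA chA hnA l0A lXA FAeq FAint]
  have p11a: "p11 = r1 + (r1 - r2) * (LBINT t=0..\<infinity>. exp (-t) * hA t)"
    unfolding assms(16) mu_eq by (rule expect[OF assms(14,15) hAm SA(1)])
  define I1 where "I1 = (LBINT y=0..b. y powr q * (1 - y) powr (-1))"
  have "(LBINT y=0..b. FA y) = (LBINT y=0..b. (b powr (-q) / s) * (y powr q * (1 - y) powr (-1)))"
  proof (rule interval_integral_cong)
    fix y assume "y \<in> einterval (min 0 (ereal b)) (max 0 (ereal b))"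
    then have y: "0 < y" "y < b" using bp by (auto simp: einterval_def zero_ereal_def min_def max_def split: if_splits)
    then show "FA y = (b powr (-q) / s) * (y powr q * (1 - y) powr (-1))"
      using bp bl by (simp add: FA_def powr_divide powr_minus field_simps)
  qed
  also have "\<dots> = b powr (-q) / s * I1" unfolding I1_def by (rule interval_lebesgue_integral_mult_right)
  finally have FAI: "(LBINT y=0..b. FA y) = b powr (-q) / s * I1" .
  have A: "p11 = r1 + 2 * b powr (- 1 / (a * beta)) / beta * I1"
  proof -
    have "p11 = r1 + (r1 - r2) * (b powr (-q) / s * I1)" using p11a SA(2) FAI by simp
    also have "(r1 - r2) * (b powr (-q) / s * I1) = (r1 - r2) / s * b powr (-q) * I1" by simp
    finally show ?thesis unfolding r12s mq by simp
  qed
  have s1: "(\<lambda>k. 1 * b powr (q + real k + 1) / (q + real k + 1)) sums I1"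
    unfolding I1_def
  proof (rule series_int)
    show "q > -1" using qp by simp
    show "0 < b" by fact
    show "0 \<le> (1::real)" by simp
    show "(\<lambda>k. 1 * y ^ k) sums (1 - y) powr (-1)" if "0 < y" "y < b" for y :: real
      using geometric_sums[of y] that bl by (simp add: powr_minus_divide)
    show "set_integrable lborel {0<..<b} (\<lambda>y. y powr q * (1 - y) powr (-1))"
    proof (rule bnd_int[OF bp, where B="1 / (1 - b)"])
      show "(\<lambda>y. y powr q * (1 - y) powr (-1)) \<in> borel_measurable borel"
        by (intro borel_measurable_times borel_measurable_diff borel_measurable_const powr_real_measurable measurable_id)
      fix y :: real assume y: "0 < y" "y < b"
      have "y powr q \<le> 1" using y bl qp by (intro powr_le1) auto
      moreover have "(1 - y) powr (-1) \<le> 1 / (1 - b)"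
        using y bl by (simp add: powr_minus_divide frac_le)
      moreover have "0 \<le> (1 - y) powr (-1)" by simp
      ultimately have "y powr q * (1 - y) powr (-1) \<le> 1 * (1 / (1 - b))"
        by (intro mult_mono) auto
      then show "\<bar>y powr q * (1 - y) powr (-1)\<bar> \<le> 1 / (1 - b)" by simp
    qed
    show "(\<lambda>y::real. (1 - y) powr (-1)) \<in> borel_measurable borel" by measurable
  qed
  have s1m: "(\<lambda>k. b powr (-q) * (1 * b powr (q + real k + 1) / (q + real k + 1))) sums (b powr (-q) * I1)"
    by (rule sums_mult[OF s1])
  have teq: "b powr (-q) * (1 * b powr (q + real k + 1) / (q + real k + 1)) = b ^ (k + 1) / (q + real k + 1)" for k
  proof -
    have "b powr (-q) * b powr (q + real k + 1) = b powr (real (k + 1))"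
      by (subst powr_add[symmetric]) (simp add: add.commute)
    also have "\<dots> = b ^ (k + 1)" by (rule powr_realpow[OF bp])
    finally have e: "b powr (-q) * b powr (q + real k + 1) = b ^ (k + 1)" .
    show ?thesis unfolding mult_1_left times_divide_eq_right e by (rule refl)
  qed
  have s1': "(\<lambda>k. b ^ (k + 1) / (q + real k + 1)) sums (b powr (-q) * I1)"
    using s1m unfolding teq .
  have B: "p11 = r1 + 2 / beta * (\<Sum>k. b ^ (k + 1) / (1 / (a * beta) + real k + 1))"
    unfolding A mq q_def[symmetric] sums_unique[OF s1', symmetric] by (simp add: field_simps)
  define hC where "hC = (\<lambda>t. c * exp (- (s * t)) / (1 + c * exp (- (s * t))))"
  have rc: "r1 / r2 = - c" using assms(11) by simp
  have cE: "0 < 1 + c * exp (- (s * t))" for t using cp by (simp add: add_pos_pos)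
  have nu_eq: "nu = (\<lambda>t. r1 + (- (r1 - r2)) * hC t)"
  proof (rule ext)
    fix t
    have d: "1 + c * exp (- (s * t)) \<noteq> 0" using cE[of t] by simp
    have "nu t = r1 + (r1 - r2) * (- c * exp (- (s * t))) / (1 - (- c) * exp (- (s * t)))"
      unfolding assms(13) rc by (simp add: expeq)
    also have "\<dots> = r1 + (- (r1 - r2)) * hC t" unfolding hC_def using d by (simp add: field_simps)
    finally show "nu t = r1 + (- (r1 - r2)) * hC t" .
  qed
  have hCm: "hC \<in> borel_measurable borel" unfolding hC_def
    by (intro borel_measurable_divide borel_measurable_times borel_measurable_add borel_measurable_const em2)
  define GC where "GC = (\<lambda>y. (- ln c - ln (1 - y) + ln y) / s)"
  define FC where "FC = (\<lambda>y. c powr (-q) / s * (y powr q * (1 - y) powr (- q - 1)))"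
  have FCeq: "exp (GC y) * hC (- GC y) * (1 / (s * y * (1 - y))) = FC y"
    if y: "0 < y" "y < x" for y
    unfolding GC_def hC_def FC_def by (rule FCeq_lemma) (use y xl cp sp qs in auto)
  have FCb: "\<bar>FC y\<bar> \<le> c powr (-q) / s * (1 - x) powr (- q - 1)" if y: "0 < y" "y < x" for y
  proof -
    have y1: "y < 1" using y xl by simp
    have "y powr q \<le> 1" using y y1 qp by (intro powr_le1) auto
    moreover have "(1 - y) powr (- q - 1) \<le> (1 - x) powr (- q - 1)"
      using y xl qp by (intro powr_mono2') auto
    moreover have "0 \<le> (1 - y) powr (- q - 1)" by simp
    ultimately have "y powr q * (1 - y) powr (- q - 1) \<le> 1 * (1 - x) powr (- q - 1)"
      by (intro mult_mono) auto
    then have "c powr (-q) / s * (y powr q * (1 - y) powr (- q - 1)) \<le> c powr (-q) / s * (1 * (1 - x) powr (- q - 1))"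
      using sp by (intro mult_left_mono) auto
    then show ?thesis using sp by (simp add: FC_def abs_mult)
  qed
  have FCm: "FC \<in> borel_measurable borel" unfolding FC_def by measurable
  have dC: "DERIV GC y :> 1 / (s * y * (1 - y))" if "0 < y" "y < x" for y
  proof -
    have "y < 1" using that xl by simp
    then show ?thesis unfolding GC_def
      using that sp by (auto intro!: derivative_eq_intros simp: field_simps)
  qed
  have cC: "isCont (\<lambda>y. 1 / (s * y * (1 - y))) y" if "0 < y" "y < x" for y
    using that sp xl by (auto intro!: continuous_intros)
  have gC: "0 \<le> 1 / (s * y * (1 - y))" if "0 \<le> y" "y \<le> x" for y
    using that sp xl by simp
  have nC: "GC y < 0" if y: "0 < y" "y < x" for y
  proof -
    have y1: "y < 1" using y xl by simp
    have "y < c * (1 - y)" using y unfolding x_def using cp by (simp add: field_simps)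
    then have "y / (1 - y) < c" using y1 by (simp add: field_simps)
    then have "ln (y / (1 - y)) < ln c" using y y1 cp by simp
    then show ?thesis using y y1 sp by (simp add: GC_def ln_div divide_neg_pos)
  qed
  have chC: "isCont hC t" if "0 < t" for t
    using cE[of t] unfolding hC_def by (auto intro!: continuous_intros)
  have hnC: "0 \<le> hC t" if "0 < t" for t
    using cE[of t] cp unfolding hC_def by simp
  have l0C: "filterlim GC at_bot (at_right 0)" unfolding GC_def
  proof (rule lnlim[OF _ sp])
    have "((\<lambda>y. - ln c - ln (1 - y)) \<longlongrightarrow> - ln c - ln (1 - 0)) (at 0)"
      by (intro tendsto_intros) auto
    then show "((\<lambda>y. - ln c - ln (1 - y)) \<longlongrightarrow> - ln c - ln (1 - 0)) (at_right 0)"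
      using tendsto_mono[OF at_le[OF subset_UNIV]] by blast
  qed
  have "(GC \<longlongrightarrow> (- ln c - ln (1 - x) + ln x) / s) (at x)"
    unfolding GC_def using xp xl sp by (intro tendsto_intros) auto
  moreover have "- ln c - ln (1 - x) + ln x = 0"
  proof -
    have "x / (1 - x) = c" using cp by (simp add: x_def field_simps)
    then have "ln x - ln (1 - x) = ln c" using xp xl ln_div[of x "1 - x"] by simp
    then show ?thesis by simp
  qed
  ultimately have lXC: "(GC \<longlongrightarrow> 0) (at_left x)" by (intro at_left_lim) simp
  have FCint: "set_integrable lborel {0<..<x} FC" by (rule bnd_int[OF xp FCm FCb])
  note SC = subst_gen[where X=x and G=GC and G'="\<lambda>y. 1 / (s * y * (1 - y))" and h=hC and F=FC,
     OF xp dC cC gC nC chC hnC l0C lXC FCeq FCint]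
  have p21a: "p21 = r1 + (- (r1 - r2)) * (LBINT t=0..\<infinity>. exp (-t) * hC t)"
    unfolding assms(17) nu_eq by (rule expect[OF assms(14,15) hCm SC(1)])
  define I2 where "I2 = (LBINT y=0..x. y powr q * (1 - y) powr (- q - 1))"
  have FCI: "(LBINT y=0..x. FC y) = c powr (-q) / s * I2"
    unfolding FC_def I2_def by (rule interval_lebesgue_integral_mult_right)
  have mq1: "- 1 / (a * beta) - 1 = - q - 1" using mq by simp
  have C: "p21 = r1 - 2 * c powr (- 1 / (a * beta)) / beta *
                 (LBINT y=0..c / (1 + c). y powr (1 / (a * beta)) * (1 - y) powr (- 1 / (a * beta) - 1))"
  proof -
    have "p21 = r1 + (- (r1 - r2)) * (c powr (-q) / s * I2)" using p21a SC(2) FCI by simp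
    then have "p21 = r1 - (r1 - r2) * (c powr (-q) / s * I2)" by (simp only: mult_minus_left diff_conv_add_uminus)
    also have "(r1 - r2) * (c powr (-q) / s * I2) = (r1 - r2) / s * c powr (-q) * I2" by simp
    finally show ?thesis unfolding r12s mq mq1 q_def[symmetric] x_def[symmetric] I2_def by simp
  qed
  have s2: "(\<lambda>k. pochhammer (q + 1) k / fact k * x powr (q + real k + 1) / (q + real k + 1)) sums I2"
    unfolding I2_def
  proof (rule series_int)
    show "q > -1" using qp by simp
    show "0 < x" by fact
    show "0 \<le> pochhammer (q + 1) k / fact k" for k using qp by (simp add: pochhammer_nonneg)
    show "(\<lambda>k. pochhammer (q + 1) k / fact k * y ^ k) sums (1 - y) powr (- q - 1)"
      if "0 < y" "y < x" for y :: real
    proof -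
      have "\<bar>- y\<bar> < 1" using that xl by simp
      from gen_binomial_real[OF this, of "- q - 1"]
      have "(\<lambda>n. ((- q - 1) gchoose n) * (- y) ^ n) sums (1 + - y) powr (- q - 1)" .
      moreover have "((- q - 1) gchoose n) * (- y) ^ n = pochhammer (q + 1) n / fact n * y ^ n" for n
      proof -
        have m: "(-1::real) ^ n * (-1) ^ n = 1" by (simp add: power_mult_distrib[symmetric])
        have nq: "- (- q - 1) = q + 1" by simp
        have g: "((- q - 1) gchoose n) = (-1) ^ n * (pochhammer (q + 1) n / fact n)"
          unfolding gbinomial_pochhammer nq by simp
        have "((- q - 1) gchoose n) * (- y) ^ n = ((-1) ^ n * (-1) ^ n) * (pochhammer (q + 1) n / fact n * y ^ n)"
          unfolding g power_minus[of y n] by (simp only: mult.assoc mult.commute mult.left_commute)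
        then show ?thesis unfolding m by simp
      qed
      ultimately show ?thesis by simp
    qed
    show "set_integrable lborel {0<..<x} (\<lambda>y. y powr q * (1 - y) powr (- q - 1))"
    proof (rule bnd_int[OF xp, where B="(1 - x) powr (- q - 1)"])
      show "(\<lambda>y. y powr q * (1 - y) powr (- q - 1)) \<in> borel_measurable borel" by measurable
      fix y :: real assume y: "0 < y" "y < x"
      have "y powr q \<le> 1" using y xl qp by (intro powr_le1) auto
      moreover have "(1 - y) powr (- q - 1) \<le> (1 - x) powr (- q - 1)"
        using y xl qp by (intro powr_mono2') auto
      moreover have "0 \<le> (1 - y) powr (- q - 1)" by simp
      ultimately have "y powr q * (1 - y) powr (- q - 1) \<le> 1 * (1 - x) powr (- q - 1)"
        by (intro mult_mono) auto
      then show "\<bar>y powr q * (1 - y) powr (- q - 1)\<bar> \<le> (1 - x) powr (- q - 1)" by simp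
    qed
    show "(\<lambda>y::real. (1 - y) powr (- q - 1)) \<in> borel_measurable borel" by measurable
  qed
  have aq: "(a * beta + 1) / (a * beta) = q + 1" using ab sp by (simp add: q_def field_simps)
  have D: "p21 = r1 - 2 * c powr (- 1 / (a * beta)) / beta *
                 (\<Sum>k. pochhammer ((a * beta + 1) / (a * beta)) k / fact k
                       * (c / (1 + c)) powr (1 / (a * beta) + real k + 1)
                       / (1 / (a * beta) + real k + 1))"
    unfolding aq q_def[symmetric] x_def[symmetric] sums_unique[OF s2, symmetric]
    using C unfolding q_def[symmetric] x_def[symmetric] I2_def mq mq1 by simp
  show ?thesis using A B C D by (simp only: I1_def q_def)
qed

end
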